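(* Let $\{\lambda_n\}_{n=0}^\infty$ be a non-trivial non-negative (classical) multiplier sequence and let $T$ be the linear operator on $\mathbb{R}[x]$ with $T(H_n)=\lambda_nH_n$ for all $n$, so that $G_T(x,y)=e^{y^2/4}\sum_{k\ge0}\frac{\lambda_kH_k(x)(-y)^k}{2^kk!}$. Then $G_T(-x,y)\notin\mathscr{L\text{-}P}_2(\mathbb{R})$.
   Context: The Hermite polynomials are defined by $\exp(2xt-t^2)=\sum_{n\ge0}\frac{H_n(x)}{n!}t^n$. A multiplier sequence is a real sequence $\{\lambda_n\}$ such that $x^n\mapsto\lambda_nx^n$ maps real-rooted polynomials to real-rooted polynomials. A sequence is trivial if there is $k$ with $\lambda_n=0$ for all $n\notin\{k,k+1\}$. The symbol of a linear operator $T$ on $\mathbb{R}[x]$ is $G_T(x,y)=\sum_{n\ge0}\frac{(-1)^nT(x^n)}{n!}y^n$. A polynomial in $\mathbb{C}[x,y]$ is stable if it has no zero with $\operatorname{Im}x>0,\operatorname{Im}y>0$; $\mathscr{L\text{-}P}_2(\mathbb{R})$ is the class of real entire functions of two variables that are limits, uniformly on compact subsets of $\mathbb{C}^2$, of real stable polynomials. *)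

theory Defs
  imports "HOL-Analysis.Analysis" "HOL-Computational_Algebra.Polynomial"
begin

text \<open>Physicists' Hermite polynomials, given by the standard three-term recurrence
  equivalent to the generating function exp(2xt - t^2) = sum H_n(x) t^n / n!.\<close>
fun hermite :: "nat \<Rightarrow> real poly" where
  "hermite 0 = 1"
| "hermite (Suc 0) = [:0, 2:]"
| "hermite (Suc (Suc n)) = [:0, 2:] * hermite (Suc n) - smult (2 * real (Suc n)) (hermite n)"

definition real_rooted :: "real poly \<Rightarrow> bool" where
  "real_rooted p \<longleftrightarrow> p = 0 \<or> (\<forall>z::complex. poly (map_poly of_real p) z = 0 \<longrightarrow> Im z = 0)"

definition diag_op :: "(nat \<Rightarrow> real) \<Rightarrow> real poly \<Rightarrow> real poly" where
  "diag_op lam p = (\<Sum>n\<le>degree p. monom (lam n * coeff p n) n)"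

definition multiplier_sequence :: "(nat \<Rightarrow> real) \<Rightarrow> bool" where
  "multiplier_sequence lam \<longleftrightarrow> (\<forall>p. real_rooted p \<longrightarrow> real_rooted (diag_op lam p))"

definition trivial_seq :: "(nat \<Rightarrow> real) \<Rightarrow> bool" where
  "trivial_seq lam \<longleftrightarrow> (\<exists>k. \<forall>n. n \<notin> {k, Suc k} \<longrightarrow> lam n = 0)"

definition symbol :: "(real poly \<Rightarrow> real poly) \<Rightarrow> complex \<Rightarrow> complex \<Rightarrow> complex" where
  "symbol T x y = (\<Sum>n. (-1) ^ n * poly (map_poly of_real (T (monom 1 n))) x * y ^ n / of_nat (fact n))"

definition real_poly2 :: "(complex \<Rightarrow> complex \<Rightarrow> complex) \<Rightarrow> bool" where
  "real_poly2 f \<longleftrightarrow> (\<exists>N (c :: nat \<Rightarrow> nat \<Rightarrow> real).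
     \<forall>x y. f x y = (\<Sum>i\<le>N. \<Sum>j\<le>N. of_real (c i j) * x ^ i * y ^ j))"

definition stable2 :: "(complex \<Rightarrow> complex \<Rightarrow> complex) \<Rightarrow> bool" where
  "stable2 f \<longleftrightarrow> (\<forall>x y. Im x > 0 \<longrightarrow> Im y > 0 \<longrightarrow> f x y \<noteq> 0)"

text \<open>Laguerre--P\'olya class in two variables: locally uniform limits on C^2 of real stable polynomials.\<close>
definition LP2 :: "(complex \<Rightarrow> complex \<Rightarrow> complex) \<Rightarrow> bool" where
  "LP2 f \<longleftrightarrow> (\<exists>p :: nat \<Rightarrow> complex \<Rightarrow> complex \<Rightarrow> complex.
     (\<forall>k. real_poly2 (p k) \<and> stable2 (p k)) \<and>
     (\<forall>K :: (complex \<times> complex) set. compact K \<longrightarrow>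
        uniform_limit K (\<lambda>k z. p k (fst z) (snd z)) (\<lambda>z. f (fst z) (snd z)) sequentially))"

end

theory Submission
  imports Defs "HOL-Computational_Algebra.Fundamental_Theorem_Algebra"
begin


definition cp :: "real poly \<Rightarrow> complex poly" where "cp p = map_poly of_real p"

lemma coeff_cp [simp]: "coeff (cp p) n = of_real (coeff p n)"
  by (simp add: cp_def coeff_map_poly)

lemma cp_add [simp]: "cp (p + q) = cp p + cp q"
  by (intro poly_eqI) simp
lemma cp_diff [simp]: "cp (p - q) = cp p - cp q"
  by (intro poly_eqI) simp
lemma cp_smult [simp]: "cp (smult c p) = smult (of_real c) (cp p)"
  by (intro poly_eqI) simp
lemma cp_mult [simp]: "cp (p * q) = cp p * cp q"
  by (intro poly_eqI) (simp add: coeff_mult)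
lemma cp_pderiv [simp]: "cp (pderiv p) = pderiv (cp p)"
  by (intro poly_eqI) (simp add: coeff_pderiv)
lemma cp_0 [simp]: "cp 0 = 0"
  by (intro poly_eqI) simp
lemma cp_eq_0_iff [simp]: "cp p = 0 \<longleftrightarrow> p = 0"
  by (auto simp: poly_eq_iff)
lemma cp_monom [simp]: "cp (monom c n) = monom (of_real c) n"
  by (intro poly_eqI) (simp add: coeff_monom)
lemma cp_pCons [simp]: "cp (pCons a p) = pCons (of_real a) (cp p)"
  by (intro poly_eqI) (simp add: coeff_pCons split: nat.splits)
lemma degree_cp [simp]: "degree (cp p) = degree p"
  by (simp add: cp_def degree_map_poly)
lemma poly_cp_of_real: "poly (cp p) (of_real x) = of_real (poly p x)"
  by (induction p) auto
lemma poly_cp_cnj: "poly (cp p) (cnj z) = cnj (poly (cp p) z)"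
  by (subst poly_cnj_real) auto

lemma rr_factor:
  assumes "real_rooted q" "degree q > 0"
  shows "\<exists>r h. q = [:-r,1:] * h \<and> real_rooted h \<and> h \<noteq> 0"
proof -
  have "\<not> constant (poly (cp q))" using assms(2) by (simp add: constant_degree)
  then obtain z where z: "poly (cp q) z = 0" using fundamental_theorem_of_algebra by blast
  have q0: "q \<noteq> 0" using assms(2) by auto
  have "Im z = 0" using assms(1) z q0 unfolding real_rooted_def cp_def by auto
  then have zr: "z = of_real (Re z)" by (simp add: complex_eq_iff)
  have "poly q (Re z) = 0" using z zr poly_cp_of_real[of q "Re z"] by simp
  then obtain h where h: "q = [:-Re z,1:] * h" using poly_eq_0_iff_dvd by blast
  have h0: "h \<noteq> 0" using q0 h by auto
  have "real_rooted h"
    unfolding real_rooted_def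
  proof (intro disjI2 allI impI)
    fix w assume "poly (map_poly complex_of_real h) w = 0"
    then have "poly (cp q) w = 0" by (simp add: h cp_def[symmetric])
    then show "Im w = 0" using assms(1) q0 unfolding real_rooted_def cp_def by auto
  qed
  with h h0 show ?thesis by blast
qed

lemma rr_S: "real_rooted q \<Longrightarrow> 2 * coeff q 0 * coeff q 2 \<le> (coeff q 1)^2"
proof (induction "degree q" arbitrary: q rule: less_induct)
  case less
  show ?case
  proof (cases "degree q = 0")
    case True
    then have "coeff q 1 = 0" "coeff q 2 = 0" by (auto intro: coeff_eq_0)
    then show ?thesis by simp
  next
    case False
    then obtain r h where h: "q = [:-r,1:] * h" "real_rooted h" "h \<noteq> 0"
      using rr_factor less.prems by blast
    have "degree q = degree h + 1" unfolding h(1) using h(3) by (subst degree_mult_eq) auto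
    then have IH: "2 * coeff h 0 * coeff h 2 \<le> (coeff h 1)^2" using less h by auto
    have c: "coeff q 0 = - r * coeff h 0" "coeff q 1 = - r * coeff h 1 + coeff h 0"
         "coeff q 2 = - r * coeff h 2 + coeff h 1"
      by (simp_all add: h mult_pCons_left coeff_pCons numeral_2_eq_2)
    have "(coeff q 1)^2 - 2 * coeff q 0 * coeff q 2
        = r^2 * ((coeff h 1)^2 - 2 * coeff h 0 * coeff h 2) + (coeff h 0)^2"
      unfolding c by (simp add: algebra_simps power2_eq_square)
    moreover have "r^2 * ((coeff h 1)^2 - 2 * coeff h 0 * coeff h 2) \<ge> 0"
      using IH by simp
    ultimately show ?thesis by (smt (verit) zero_le_power2)
  qed
qed

lemma rr_nonzero:
  assumes "real_rooted q" "q \<noteq> 0" "Im z \<noteq> 0"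
  shows "poly (cp q) z \<noteq> 0"
  using assms unfolding real_rooted_def cp_def by auto

lemma rr_logderiv:
  assumes "real_rooted q" "degree q > 0" "Im z > 0"
  shows "Im (poly (cp (pderiv q)) z / poly (cp q) z) < 0"
  using assms
proof (induction "degree q" arbitrary: q rule: less_induct)
  case less
  obtain r h where h: "q = [:-r,1:] * h" "real_rooted h" "h \<noteq> 0"
    using rr_factor less.prems by blast
  have dq: "degree q = degree h + 1" unfolding h(1) using h(3) by (subst degree_mult_eq) auto
  have hz: "poly (cp h) z \<noteq> 0" using rr_nonzero h less.prems by auto
  have zr: "z - of_real r \<noteq> 0" using less.prems(3) by (auto simp: complex_eq_iff)
  have pd: "pderiv q = [:-r,1:] * pderiv h + h"
    unfolding h(1) pderiv_mult by (simp add: pderiv_pCons)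
  have eq: "poly (cp (pderiv q)) z / poly (cp q) z
      = poly (cp (pderiv h)) z / poly (cp h) z + 1 / (z - of_real r)"
  proof -
    have pq: "poly (cp q) z = (z - of_real r) * poly (cp h) z" by (simp add: h(1) algebra_simps)
    have pdq: "poly (cp (pderiv q)) z = (z - of_real r) * poly (cp (pderiv h)) z + poly (cp h) z"
      by (simp only: pd cp_add cp_mult poly_add poly_mult) simp
    show ?thesis unfolding pq pdq using hz zr by (simp add: field_simps)
  qed
  have i1: "Im (1 / (z - of_real r)) < 0"
  proof -
    have "0 < Im z / ((Re z - r)\<^sup>2 + (Im z)\<^sup>2)"
      using less.prems(3) by (auto intro!: divide_pos_pos add_nonneg_pos)
    then show ?thesis using less.prems(3) zr by (simp add: Im_divide complex_norm_square[symmetric] divide_neg_pos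
        del: complex_norm_square)
  qed
  have i2: "Im (poly (cp (pderiv h)) z / poly (cp h) z) \<le> 0"
  proof (cases "degree h = 0")
    case True
    then have "pderiv h = 0" by (simp add: pderiv_eq_0_iff)
    then show ?thesis by simp
  next
    case False
    then show ?thesis using less.hyps[of h] dq h less.prems by fastforce
  qed
  show ?case unfolding eq using i1 i2 by simp
qed

lemma rr_pderiv:
  assumes "real_rooted q"
  shows "real_rooted (pderiv q)"
proof (cases "pderiv q = 0")
  case True then show ?thesis by (simp add: real_rooted_def)
next
  case False
  then have dq: "degree q > 0" by (simp add: pderiv_eq_0_iff)
  have q0: "q \<noteq> 0" using dq by auto
  have *: "poly (cp (pderiv q)) z \<noteq> 0" if "Im z > 0" for z
  proof
    assume "poly (cp (pderiv q)) z = 0"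
    then have "Im (poly (cp (pderiv q)) z / poly (cp q) z) = 0" by simp
    with rr_logderiv[OF assms dq that] show False by simp
  qed
  show ?thesis unfolding real_rooted_def
  proof (intro disjI2 allI impI)
    fix z assume z: "poly (map_poly complex_of_real (pderiv q)) z = 0"
    show "Im z = 0"
    proof (rule ccontr)
      assume "Im z \<noteq> 0"
      then consider "Im z > 0" | "Im (cnj z) > 0" by force
      then show False
      proof cases
        case 1 then show False using * z by (simp add: cp_def)
      next
        case 2
        have z': "poly (cp (pderiv q)) z = 0" using z by (simp add: cp_def)
        show False using *[of "cnj z"] 2 z' poly_cp_cnj[of "pderiv q" z] by (simp del: cp_pderiv)
      qed
    qed
  qed
qed

lemma rr_pderiv_iter: "real_rooted q \<Longrightarrow> real_rooted ((pderiv ^^ j) q)"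
  by (induction j) (auto intro: rr_pderiv)

lemma coeff_pderiv_iter:
  fixes q :: "real poly"
  shows "coeff ((pderiv ^^ j) q) i = coeff q (i + j) * (fact (i + j) / fact i)"
proof (induction j arbitrary: i)
  case 0
  have "(fact i :: real) \<noteq> 0" by (rule fact_nonzero)
  then show ?case by simp
next
  case (Suc j)
  have "coeff ((pderiv ^^ Suc j) q) i = of_nat (Suc i) * coeff ((pderiv ^^ j) q) (Suc i)"
    by (simp add: coeff_pderiv)
  also have "\<dots> = of_nat (Suc i) * (coeff q (i + Suc j) * (fact (i + Suc j) / fact (Suc i)))"
    by (simp add: Suc del: of_nat_Suc)
  also have "\<dots> = coeff q (i + Suc j) * (fact (i + Suc j) / fact i)"
    by (simp only: fact_Suc[of i]) (simp add: field_simps del: fact_Suc of_nat_Suc)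
  finally show ?case .
qed

lemma rr_newton:
  assumes "real_rooted q"
  shows "fact j * fact (j+2) * coeff q j * coeff q (j+2) \<le> (fact (j+1))^2 * (coeff q (j+1))^2"
proof -
  have "2 * coeff ((pderiv ^^ j) q) 0 * coeff ((pderiv ^^ j) q) 2 \<le> (coeff ((pderiv ^^ j) q) 1)^2"
    by (rule rr_S[OF rr_pderiv_iter[OF assms]])
  then show ?thesis by (simp add: coeff_pderiv_iter add.commute power_mult_distrib) (simp add: mult_ac)
qed



lemma coeff_diag_op: "coeff (diag_op lam p) i = lam i * coeff p i"
proof -
  have "coeff (diag_op lam p) i = (\<Sum>n\<le>degree p. if n = i then lam n * coeff p n else 0)"
    by (simp add: diag_op_def coeff_sum coeff_monom)
  also have "\<dots> = (if i \<le> degree p then lam i * coeff p i else 0)"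
    by (simp add: sum.delta')
  also have "\<dots> = lam i * coeff p i" by (auto simp: coeff_eq_0)
  finally show ?thesis .
qed

lemma cp_1 [simp]: "cp 1 = 1"
  by (intro poly_eqI) (simp add: coeff_1)

lemma cp_power [simp]: "cp (p ^ n) = (cp p) ^ n"
  by (induction n) simp_all

lemma rr_mult_right:
  assumes "p \<noteq> 0" "real_rooted (p * q)"
  shows "real_rooted q"
proof (cases "q = 0")
  case True then show ?thesis by (simp add: real_rooted_def)
next
  case False
  then have pq: "p * q \<noteq> 0" using assms by simp
  show ?thesis unfolding real_rooted_def
  proof (intro disjI2 allI impI)
    fix z assume "poly (map_poly complex_of_real q) z = 0"
    then have "poly (cp (p*q)) z = 0" by (simp add: cp_def[symmetric])
    then show "Im z = 0" using assms(2) pq unfolding real_rooted_def cp_def by auto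
  qed
qed

lemma rr_quadratic:
  assumes "real_rooted q" "degree q \<le> 2"
  shows "4 * coeff q 0 * coeff q 2 \<le> (coeff q 1)^2"
proof (cases "degree q = 0")
  case True
  then have "coeff q 2 = 0" by (auto intro: coeff_eq_0)
  then show ?thesis by simp
next
  case False
  then obtain r h where h: "q = [:-r,1:] * h" "h \<noteq> 0"
    using rr_factor assms by blast
  have "degree q = degree h + 1" unfolding h(1) using h(2) by (subst degree_mult_eq) auto
  then have "coeff h 2 = 0" using assms(2) by (intro coeff_eq_0) auto
  then have c: "coeff q 0 = - r * coeff h 0" "coeff q 1 = - r * coeff h 1 + coeff h 0"
         "coeff q 2 = coeff h 1"
    by (simp_all add: h mult_pCons_left coeff_pCons numeral_2_eq_2)
  have "(coeff q 1)^2 - 4 * coeff q 0 * coeff q 2 = (r * coeff h 1 + coeff h 0)^2"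
    unfolding c by (simp add: algebra_simps power2_eq_square)
  then show ?thesis by (smt (verit) zero_le_power2)
qed

lemma rr_monom_linpow: "real_rooted (monom 1 a * [:1,1:] ^ j)"
  unfolding real_rooted_def
proof (intro disjI2 allI impI)
  fix z assume "poly (map_poly complex_of_real (monom 1 a * [:1, 1:] ^ j)) z = 0"
  then have "z ^ a * (1 + z) ^ j = 0" by (simp add: cp_def[symmetric] poly_monom)
  then have "z = 0 \<or> z = -1" by (auto simp: add_eq_0_iff)
  then show "Im z = 0" by auto
qed

lemma turan:
  assumes "multiplier_sequence lam"
  shows "lam k * lam (Suc (Suc k)) \<le> (lam (Suc k))^2"
proof -
  let ?p = "monom 1 k * [:1,1:] ^ 2 :: real poly"
  have rr: "real_rooted (diag_op lam ?p)"
    using assms rr_monom_linpow unfolding multiplier_sequence_def by blast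
  have eq: "diag_op lam ?p = monom 1 k * [:lam k, 2 * lam (Suc k), lam (Suc (Suc k)):]"
  proof (rule poly_eqI)
    fix i
    show "coeff (diag_op lam ?p) i = coeff (monom 1 k * [:lam k, 2 * lam (Suc k), lam (Suc (Suc k)):]) i"
    proof (cases "i < k")
      case True then show ?thesis unfolding coeff_diag_op coeff_monom_mult by simp
    next
      case False
      then obtain l where l: "i = k + l" using le_iff_add by (metis not_less)
      show ?thesis unfolding l coeff_diag_op coeff_monom_mult
        by (auto simp: power2_eq_square coeff_pCons split: nat.splits)
    qed
  qed
  have "real_rooted [:lam k, 2 * lam (Suc k), lam (Suc (Suc k)):]"
    using rr unfolding eq by (rule rr_mult_right[rotated]) simp
  moreover have "degree [:lam k, 2 * lam (Suc k), lam (Suc (Suc k)):] \<le> 2"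
    by (simp add: degree_pCons_eq_if)
  ultimately have "4 * lam k * lam (Suc (Suc k)) \<le> (2 * lam (Suc k))^2"
    using rr_quadratic by (fastforce simp: numeral_2_eq_2)
  then show ?thesis by (simp add: power2_eq_square)
qed



lemma binom_root:
  assumes "c > 0" "a > 0" "j \<ge> 2"
  shows "\<exists>z. Im z > 0 \<and> of_real a + of_real c * z ^ j = 0"
proof -
  define r where "r = root j (a / c)"
  have r0: "r > 0" using assms by (simp add: r_def)
  have rj: "r ^ j = a / c" using assms by (simp add: r_def)
  define z where "z = of_real r * cis (pi / real j)"
  have dm: "cis (pi / real j) ^ j = cis (real j * (pi / real j))" by (rule Complex.DeMoivre)
  have "real j * (pi / real j) = pi" using assms by simp
  then have dm2: "cis (pi / real j) ^ j = -1" using dm by simp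
  have zj: "z ^ j = - of_real (a / c)"
    unfolding z_def power_mult_distrib dm2 by (simp add: rj flip: of_real_power)
  have "Im z = r * sin (pi / real j)" by (simp add: z_def)
  moreover have "sin (pi / real j) > 0"
    using assms by (intro sin_gt_zero) (auto simp: field_simps)
  ultimately have "Im z > 0" using r0 by simp
  moreover have "of_real a + of_real c * z ^ j = 0"
    using assms by (simp add: zj)
  ultimately show ?thesis by blast
qed

lemma zero_prop:
  assumes ms: "multiplier_sequence lam" and nn: "\<forall>n. lam n \<ge> 0"
    and a: "lam a > 0" "lam (Suc a) = 0"
  shows "j \<ge> 1 \<Longrightarrow> lam (a + j) = 0"
proof (induction j rule: less_induct)
  case (less j)
  show ?case
  proof (cases "j = 1")
    case True then show ?thesis using a by simp
  next
    case False
    then have j2: "j \<ge> 2" using less.prems by simp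
    have IH: "lam (a + l) = 0" if "0 < l" "l < j" for l using less.IH that by simp
    let ?p = "monom 1 a * [:1,1:] ^ j :: real poly"
    let ?q = "[:lam a:] + monom (lam (a + j)) j"
    have rr: "real_rooted (diag_op lam ?p)"
      using ms rr_monom_linpow unfolding multiplier_sequence_def by blast
    have eq: "diag_op lam ?p = monom 1 a * ?q"
    proof (rule poly_eqI)
      fix i
      show "coeff (diag_op lam ?p) i = coeff (monom 1 a * ?q) i"
      proof (cases "i < a")
        case True then show ?thesis unfolding coeff_diag_op coeff_monom_mult by simp
      next
        case False
        then obtain l where l: "i = a + l" using le_iff_add by (metis not_less)
        have "lam (a + l) * coeff ([:1, 1:] ^ j) l
            = (if l = 0 then lam a else 0) + (if l = j then lam (a + j) else 0)"
        proof -
          consider "l = 0" | "l = j" | "0 < l \<and> l < j" | "l > j" by linarith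
          then show ?thesis
          proof cases
            case 1 then show ?thesis using j2 by (simp add: coeff_0_power)
          next
            case 2
            have c: "coeff ([:1,1:]^j) j = (1::real)" by (rule coeff_linear_power)
            show ?thesis using 2 j2 c by simp
          next
            case 3 then show ?thesis using IH by simp
          next
            case 4 then have "coeff ([:1, 1:] ^ j :: real poly) l = 0"
              by (intro coeff_eq_0) (simp add: degree_linear_power)
            then show ?thesis using 4 by simp
          qed
        qed
        then show ?thesis unfolding l coeff_diag_op coeff_monom_mult
          by (simp add: coeff_monom coeff_pCons split: nat.splits)
      qed
    qed
    have rq: "real_rooted ?q" using rr unfolding eq by (rule rr_mult_right[rotated]) simp
    have q0: "?q \<noteq> 0"
    proof
      assume "?q = 0"
      then have "coeff ?q 0 = 0" by simp
      then show False using a j2 by (simp add: coeff_monom)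
    qed
    show ?thesis
    proof (rule ccontr)
      assume "lam (a + j) \<noteq> 0"
      then have "lam (a + j) > 0" using nn[rule_format, of "a+j"] by linarith
      then obtain z where z: "Im z > 0" "of_real (lam a) + of_real (lam (a + j)) * z ^ j = 0"
        using binom_root[of "lam (a+j)" "lam a" j] a j2 by blast
      have "poly (cp ?q) z = 0" using z by (simp add: poly_monom)
      then show False using rq q0 z(1) unfolding real_rooted_def cp_def by auto
    qed
  qed
qed

lemma support_start:
  assumes ms: "multiplier_sequence lam" and nn: "\<forall>n. lam n \<ge> 0"
    and nt: "\<not> trivial_seq lam"
  obtains m where "lam m > 0" "lam (Suc m) > 0" "\<forall>k<m. lam k = 0"
proof -
  have "\<exists>n. lam n \<noteq> 0" using nt unfolding trivial_seq_def by blast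
  define m where "m = (LEAST n. lam n \<noteq> 0)"
  have m: "lam m \<noteq> 0" unfolding m_def using \<open>\<exists>n. lam n \<noteq> 0\<close> by (rule LeastI_ex)
  have below: "\<forall>k<m. lam k = 0" unfolding m_def using not_less_Least by blast
  have mpos: "lam m > 0" using m nn[rule_format, of m] by linarith
  have "lam (Suc m) > 0"
  proof (rule ccontr)
    assume "\<not> lam (Suc m) > 0"
    then have z: "lam (Suc m) = 0" using nn[rule_format, of "Suc m"] by linarith
    have "trivial_seq lam" unfolding trivial_seq_def
    proof (intro exI[of _ m] allI impI)
      fix n assume "n \<notin> {m, Suc m}"
      then consider "n < m" | "n \<ge> Suc m" by force
      then show "lam n = 0"
      proof cases
        case 1 then show ?thesis using below by simp
      next
        case 2
        then obtain j where j: "n = m + j" using le_Suc_ex[of m n] by auto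
        then have "j \<ge> 1" using 2 by simp
        then show ?thesis using zero_prop[OF ms nn mpos z] j by simp
      qed
    qed
    then show False using nt by simp
  qed
  then show ?thesis using that mpos below by blast
qed

lemma zero_after:
  assumes ms: "multiplier_sequence lam" and nn: "\<forall>n. lam n \<ge> 0"
    and m: "lam m > 0" and k: "k \<ge> m" "lam k = 0"
  shows "lam (k + j) = 0"
proof -
  define A where "A = {a. a < k \<and> lam a > 0}"
  have "m \<noteq> k" using m k by auto
  then have "m \<in> A" using m k by (auto simp: A_def)
  have fA: "finite A" unfolding A_def by (rule finite_subset[of _ "{..<k}"]) auto
  define a where "a = Max A"
  have aA: "a \<in> A" unfolding a_def using fA \<open>m \<in> A\<close> by (intro Max_in) auto
  have amax: "\<forall>b\<in>A. b \<le> a" unfolding a_def using fA by simp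
  have "lam (Suc a) = 0"
  proof (cases "Suc a = k")
    case True then show ?thesis using k by simp
  next
    case False
    then have "Suc a < k" using aA by (simp add: A_def)
    then have "Suc a \<notin> A" using amax by (metis Suc_n_not_le_n)
    then show ?thesis using \<open>Suc a < k\<close> nn[rule_format, of "Suc a"] by (simp add: A_def)
  qed
  moreover have "k + j = a + (k - a + j)" "k - a + j \<ge> 1" using aA by (auto simp: A_def)
  moreover have "lam a > 0" using aA by (simp add: A_def)
  ultimately have "lam (a + (k - a + j)) = 0" by (intro zero_prop[OF ms nn]) auto
  then show ?thesis by (simp only: \<open>k + j = a + (k - a + j)\<close>)
qed

lemma exp_bound:
  assumes ms: "multiplier_sequence lam" and nn: "\<forall>n. lam n \<ge> 0"
    and m: "lam m > 0" "lam (Suc m) > 0" "\<forall>k<m. lam k = 0"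
  shows "\<exists>C \<rho>. C \<ge> 0 \<and> \<rho> \<ge> 1 \<and> (\<forall>k. lam k \<le> C * \<rho> ^ k)"
proof -
  define r where "r = lam (Suc m) / lam m"
  have r0: "r \<ge> 0" using m by (simp add: r_def)
  have step: "lam (Suc (m + i)) \<le> r * lam (m + i)" for i
  proof (induction i)
    case 0 then show ?case using m by (simp add: r_def)
  next
    case (Suc i)
    show ?case
    proof (cases "lam (m + i) = 0")
      case True
      have "lam (m + i + 2) = 0" using zero_after[OF ms nn m(1) le_add1 True, of 2] .
      then show ?thesis using nn r0 by (simp add: numeral_2_eq_2)
    next
      case False
      then have pos: "lam (m + i) > 0" using nn[rule_format, of "m+i"] by linarith
      have t: "lam (m + i) * lam (Suc (Suc (m + i))) \<le> (lam (Suc (m + i)))^2"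
        by (rule turan[OF ms])
      have "lam (m + i) * lam (Suc (Suc (m + i))) \<le> lam (m + i) * (r * lam (Suc (m + i)))"
      proof -
        have "(lam (Suc (m + i)))^2 \<le> lam (Suc (m + i)) * (r * lam (m + i))"
          using Suc nn by (simp add: power2_eq_square mult_left_mono)
        then show ?thesis using t by (simp add: algebra_simps)
      qed
      then have "lam (Suc (Suc (m + i))) \<le> r * lam (Suc (m + i))"
        using pos by (simp add: mult_le_cancel_left)
      then show ?thesis by simp
    qed
  qed
  have bnd: "lam (m + i) \<le> lam m * r ^ i" for i
  proof (induction i)
    case 0 then show ?case by simp
  next
    case (Suc i)
    have "lam (m + Suc i) \<le> r * lam (m + i)" using step[of i] by simp
    also have "\<dots> \<le> r * (lam m * r ^ i)" using Suc r0 by (simp add: mult_left_mono)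
    finally show ?case by (simp add: algebra_simps)
  qed
  define \<rho> where "\<rho> = r + 1"
  have "lam k \<le> lam m * \<rho> ^ k" for k
  proof (cases "k < m")
    case True then show ?thesis using m by (simp add: \<rho>_def r0)
  next
    case False
    then obtain i where i: "k = m + i" using le_iff_add by (metis not_less)
    have "lam k \<le> lam m * r ^ i" using bnd i by simp
    also have "\<dots> \<le> lam m * \<rho> ^ i"
      using m r0 by (intro mult_left_mono power_mono) (auto simp: \<rho>_def)
    also have "\<dots> \<le> lam m * \<rho> ^ k"
      using m r0 i by (intro mult_left_mono power_increasing) (auto simp: \<rho>_def)
    finally show ?thesis .
  qed
  then show ?thesis using m r0 by (intro exI[of _ "lam m"] exI[of _ \<rho>]) (auto simp: \<rho>_def)
qed



lemma hermite_deg: "i > k \<Longrightarrow> coeff (hermite k) i = 0"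
proof (induction k arbitrary: i rule: hermite.induct)
  case 1 then show ?case by (simp add: coeff_1)
next
  case 2 then show ?case by (auto simp: coeff_pCons split: nat.splits)
next
  case (3 n)
  then show ?case by (auto simp: coeff_pCons split: nat.splits)
qed

lemma hermite_lead: "coeff (hermite k) k = 2 ^ k"
proof (induction k rule: hermite.induct)
  case 1 then show ?case by simp
next
  case 2 then show ?case by simp
next
  case (3 n)
  have "coeff (hermite n) (Suc (Suc n)) = 0" by (simp add: hermite_deg)
  then show ?case using 3 by (simp add: coeff_pCons)
qed

lemma hermite_parity: "odd (i + k) \<Longrightarrow> coeff (hermite k) i = 0"
proof (induction k arbitrary: i rule: hermite.induct)
  case 1 then show ?case by (auto simp: coeff_1 dest: odd_pos)
next
  case 2 then show ?case by (auto simp: coeff_pCons split: nat.splits)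
next
  case (3 n)
  show ?case
  proof (cases i)
    case 0
    then show ?thesis using 3 by (simp add: coeff_pCons)
  next
    case (Suc j)
    then show ?thesis using 3 by (simp add: coeff_pCons)
  qed
qed

lemma hermite_bound: "\<bar>coeff (hermite k) i\<bar> \<le> 4 ^ k * fact k"
proof (induction k arbitrary: i rule: hermite.induct)
  case 1 then show ?case by (simp add: coeff_1)
next
  case 2 then show ?case by (auto simp: coeff_pCons split: nat.splits)
next
  case (3 n)
  let ?A = "4 ^ Suc n * fact (Suc n) :: real"
  let ?B = "4 ^ n * fact n :: real"
  have a: "\<bar>coeff ([:0, 2:] * hermite (Suc n)) i\<bar> \<le> 2 * ?A"
    using "3.IH"(1)[of "i - 1"] by (cases i) (auto simp: coeff_pCons)
  have b: "\<bar>coeff (smult (2 * real (Suc n)) (hermite n)) i\<bar> \<le> 2 * real (Suc n) * ?B"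
    using "3.IH"(2)[of i] by (simp add: abs_mult)
  have "\<bar>coeff (hermite (Suc (Suc n))) i\<bar> \<le> 2 * ?A + 2 * real (Suc n) * ?B"
    using a b by (simp add: abs_triangle_ineq4 order_trans[OF abs_triangle_ineq4])
  also have "2 * ?A + 2 * real (Suc n) * ?B = 10 * (4 ^ n * fact (Suc n))"
    by (simp add: fact_Suc algebra_simps)
  also have "\<dots> \<le> 4 ^ Suc (Suc n) * fact (Suc (Suc n))"
  proof -
    have "(10::real) \<le> 16 * real (Suc (Suc n))" by simp
    then have "10 * (4 ^ n * fact (Suc n)) \<le> 16 * real (Suc (Suc n)) * (4 ^ n * fact (Suc n))"
      by (intro mult_right_mono) auto
    then show ?thesis by (simp add: fact_Suc[of "Suc n"] algebra_simps del: fact_Suc)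
  qed
  finally show ?case .
qed

lemma x_hermite:
  "[:0, 1:] * hermite k = smult (1/2) (hermite (Suc k)) + smult (real k) (hermite (k - 1))"
proof (cases k)
  case 0 then show ?thesis by simp
next
  case (Suc j)
  then show ?thesis by (simp add: algebra_simps smult_add_right poly_eq_iff coeff_pCons split: nat.splits)
qed

fun bco :: "nat \<Rightarrow> nat \<Rightarrow> real" where
  "bco 0 k = (if k = 0 then 1 else 0)"
| "bco (Suc n) k = (if k = 0 then 0 else bco n (k - 1) / 2) + real (k + 1) * bco n (k + 1)"

lemma bco_deg: "k > n \<Longrightarrow> bco n k = 0"
  by (induction n arbitrary: k) auto

lemma bco_lead: "bco n n = 1 / 2 ^ n"
  by (induction n) (auto simp: bco_deg)

lemma bco_parity: "odd (n + k) \<Longrightarrow> bco n k = 0"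
  by (induction n arbitrary: k) (auto dest: odd_pos)

lemma bco_nonneg: "bco n k \<ge> 0"
  by (induction n arbitrary: k) auto

lemma bco_bound: "bco n k * fact k \<le> fact n"
proof (induction n arbitrary: k)
  case 0 then show ?case by simp
next
  case (Suc n)
  show ?case
  proof (cases "k > Suc n")
    case True then show ?thesis by (simp add: bco_deg)
  next
    case False
    have t2: "real (k + 1) * bco n (k + 1) * fact k \<le> (if k < n then fact n else 0)"
    proof (cases "k < n")
      case True
      show ?thesis using Suc[of "k+1"] True by (simp add: fact_Suc algebra_simps)
    next
      case False then show ?thesis by (simp add: bco_deg)
    qed
    have t1: "(if k = 0 then 0 else bco n (k - 1) / 2) * fact k \<le> real k / 2 * fact n"
    proof (cases k)
      case 0 then show ?thesis by simp
    next
      case (Suc j)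
      have "bco n j / 2 * fact (Suc j) = real (Suc j) / 2 * (bco n j * fact j)"
        by (simp add: fact_Suc algebra_simps)
      also have "\<dots> \<le> real (Suc j) / 2 * fact n" using Suc.IH[of j] by (intro mult_left_mono) auto
      finally show ?thesis using Suc by simp
    qed
    have "bco (Suc n) k * fact k \<le> real k / 2 * fact n + (if k < n then fact n else 0)"
      using t1 t2 by (simp add: distrib_right)
    also have "\<dots> \<le> fact (Suc n)"
    proof (cases "k < n")
      case True
      have "(real k / 2 + 1) * fact n \<le> real (Suc n) * fact n"
        using True by (intro mult_right_mono) auto
      then have "real k / 2 * fact n + fact n \<le> real (Suc n) * fact n"
        by (simp add: algebra_simps)
      then show ?thesis using True by (simp add: fact_Suc)
    next
      case False
      have "real k / 2 * fact n \<le> real (Suc n) * fact n"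
        using \<open>\<not> k > Suc n\<close> by (intro mult_right_mono) auto
      then show ?thesis using False by (simp add: fact_Suc)
    qed
    finally show ?thesis .
  qed
qed

lemma sum_ext_zero:
  fixes f :: "nat \<Rightarrow> 'a::comm_monoid_add"
  assumes "M \<le> N" "\<And>k. M < k \<Longrightarrow> f k = 0"
  shows "(\<Sum>k\<le>N. f k) = (\<Sum>k\<le>M. f k)"
  using assms by (intro sum.mono_neutral_right) auto

lemma xpow_hermite: "monom 1 n = (\<Sum>k\<le>n. smult (bco n k) (hermite k))"
proof (induction n)
  case 0 then show ?case by simp
next
  case (Suc n)
  define g where "g k = smult (if k = 0 then 0 else bco n (k - 1) / 2) (hermite k)" for k
  define h where "h k = smult (real (k + 1) * bco n (k + 1)) (hermite k)" for k
  have "monom 1 (Suc n) = [:0, 1:] * monom (1::real) n"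
    by (simp add: monom_Suc)
  also have "\<dots> = (\<Sum>k\<le>n. smult (bco n k) ([:0, 1:] * hermite k))"
    by (subst Suc) (simp add: sum_distrib_left mult_smult_right)
  also have "\<dots> = (\<Sum>k\<le>n. smult (bco n k * (1/2)) (hermite (Suc k)))
       + (\<Sum>k\<le>n. smult (bco n k * real k) (hermite (k - 1)))"
    by (simp only: x_hermite smult_add_right sum.distrib smult_smult)
  also have "(\<Sum>k\<le>n. smult (bco n k * (1/2)) (hermite (Suc k))) = (\<Sum>k\<le>Suc n. g k)"
    by (subst sum.atMost_Suc_shift) (simp add: g_def)
  also have "(\<Sum>k\<le>n. smult (bco n k * real k) (hermite (k - 1))) = (\<Sum>k\<le>Suc n. h k)"
  proof -
    have "(\<Sum>k\<le>n. smult (bco n k * real k) (hermite (k - 1)))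
        = (\<Sum>k\<le>Suc n. smult (bco n k * real k) (hermite (k - 1)))"
      by (rule sum_ext_zero[symmetric]) (auto simp: bco_deg)
    also have "\<dots> = (\<Sum>k\<le>n. h k)"
      by (subst sum.atMost_Suc_shift) (simp add: h_def algebra_simps)
    also have "\<dots> = (\<Sum>k\<le>Suc n. h k)"
      by (rule sum_ext_zero[symmetric]) (auto simp: h_def bco_deg)
    finally show ?thesis .
  qed
  also have "(\<Sum>k\<le>Suc n. g k) + (\<Sum>k\<le>Suc n. h k) = (\<Sum>k\<le>Suc n. smult (bco (Suc n) k) (hermite k))"
    unfolding sum.distrib[symmetric] by (intro sum.cong) (auto simp: g_def h_def smult_add_left)
  finally show ?case .
qed



definition Pc :: "(nat \<Rightarrow> real) \<Rightarrow> nat \<Rightarrow> nat \<Rightarrow> real" where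
  "Pc lam n i = (\<Sum>k\<le>n. bco n k * lam k * coeff (hermite k) i)"

lemma T_zero:
  fixes T :: "real poly \<Rightarrow> real poly"
  assumes "\<forall>p q. T (p + q) = T p + T q"
  shows "T 0 = (0 :: real poly)"
proof -
  have "T 0 = T 0 + T 0" using assms[rule_format, of 0 0] by simp
  then show ?thesis by simp
qed

lemma T_sum:
  fixes T :: "real poly \<Rightarrow> real poly"
  assumes "\<forall>p q. T (p + q) = T p + T q"
  shows "finite A \<Longrightarrow> T (\<Sum>k\<in>A. f k) = (\<Sum>k\<in>A. T (f k))"
  by (induction A rule: finite_induct) (auto simp: T_zero[OF assms] assms)

lemma coeff_T_monom:
  assumes add: "\<forall>p q. T (p + q) = T p + T q"
    and sm: "\<forall>c p. T (smult c p) = smult c (T p)"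
    and ev: "\<forall>n. T (hermite n) = smult (lam n) (hermite n)"
  shows "coeff (T (monom 1 n)) i = Pc lam n i"
proof -
  have "T (monom 1 n) = (\<Sum>k\<le>n. smult (bco n k * lam k) (hermite k))"
    by (subst xpow_hermite) (simp add: T_sum[OF add] sm ev)
  then show ?thesis by (simp add: Pc_def coeff_sum)
qed

lemma Pc_below: "\<forall>k<m. lam k = 0 \<Longrightarrow> n < m \<Longrightarrow> Pc lam n i = 0"
  by (simp add: Pc_def)

lemma Pc_deg: "i > n \<Longrightarrow> Pc lam n i = 0"
  by (simp add: Pc_def hermite_deg)

lemma Pc_lead: "Pc lam n n = lam n"
proof -
  have "Pc lam n n = (\<Sum>k\<in>insert n {..<n}. bco n k * lam k * coeff (hermite k) n)"
    unfolding Pc_def by (intro sum.cong) auto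
  also have "\<dots> = bco n n * lam n * coeff (hermite n) n"
    by (subst sum.insert) (auto simp: hermite_deg)
  finally show ?thesis by (simp add: bco_lead hermite_lead)
qed

lemma Pc_parity: "odd (i + n) \<Longrightarrow> Pc lam n i = 0"
  unfolding Pc_def
proof (intro sum.neutral ballI)
  fix k assume "odd (i + n)"
  then have "odd (n + k) \<or> odd (i + k)" by auto
  then show "bco n k * lam k * coeff (hermite k) i = 0"
    using bco_parity hermite_parity by auto
qed

lemma Pc_bound:
  assumes nn: "\<forall>k. lam k \<ge> 0" and bd: "\<forall>k. lam k \<le> C * \<rho> ^ k" and r: "\<rho> \<ge> 1"
  shows "\<bar>Pc lam n i\<bar> \<le> fact n * real (n + 1) * C * (4 * \<rho>) ^ n"
proof -
  have C: "C \<ge> 0" using nn[rule_format, of 0] bd[rule_format, of 0] by simp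
  have "\<bar>Pc lam n i\<bar> \<le> (\<Sum>k\<le>n. \<bar>bco n k * lam k * coeff (hermite k) i\<bar>)"
    unfolding Pc_def by (rule sum_abs)
  also have "\<dots> \<le> (\<Sum>k\<le>n. fact n * C * (4 * \<rho>) ^ n)"
  proof (intro sum_mono)
    fix k assume k: "k \<in> {..n}"
    have "\<bar>bco n k * lam k * coeff (hermite k) i\<bar> = bco n k * lam k * \<bar>coeff (hermite k) i\<bar>"
      using nn bco_nonneg by (simp add: abs_mult)
    also have "\<dots> \<le> bco n k * lam k * (4 ^ k * fact k)"
      using nn bco_nonneg hermite_bound by (intro mult_left_mono) auto
    also have "\<dots> = (bco n k * fact k) * (lam k * 4 ^ k)" by (simp add: algebra_simps)
    also have "\<dots> \<le> fact n * (C * \<rho> ^ k * 4 ^ k)"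
      using nn bco_nonneg bco_bound bd C r by (intro mult_mono) auto
    also have "\<dots> \<le> fact n * (C * (4 * \<rho>) ^ n)"
    proof -
      have "(4 * \<rho>) ^ k \<le> (4 * \<rho>) ^ n" using r k by (intro power_increasing) auto
      then have "C * \<rho> ^ k * 4 ^ k \<le> C * (4 * \<rho>) ^ n"
        using C by (simp add: power_mult_distrib mult_left_mono algebra_simps)
      then show ?thesis by (intro mult_left_mono) auto
    qed
    finally show "\<bar>bco n k * lam k * coeff (hermite k) i\<bar> \<le> fact n * C * (4 * \<rho>) ^ n"
      by (simp add: algebra_simps)
  qed
  also have "\<dots> = fact n * real (n + 1) * C * (4 * \<rho>) ^ n" by simp
  finally show ?thesis .
qed



definition om :: "nat \<Rightarrow> complex" where "om N = cis (2 * pi / real N)"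

lemma om_pow: "om N ^ k = cis (2 * pi * real k / real N)"
  unfolding om_def Complex.DeMoivre by (simp add: field_simps)

lemma om_eq1:
  assumes "N > 0"
  shows "om N ^ k = 1 \<longleftrightarrow> N dvd k"
proof
  assume "N dvd k"
  then obtain q where "k = N * q" by auto
  then have "2 * pi * real k / real N = 2 * pi * real q" using assms by (simp add: field_simps)
  then show "om N ^ k = 1" unfolding om_pow by simp
next
  assume h: "om N ^ k = 1"
  then have "cos (2 * pi * real k / real N) = 1"
    unfolding om_pow by (metis Re_complex_of_real cis.sel(1) one_complex.sel(1))
  then obtain n :: int where n: "2 * pi * real k / real N = real_of_int n * 2 * pi"
    using cos_one_2pi_int by blast
  then have "real k = real_of_int n * real N" using assms by (simp add: field_simps)
  then have "int k = n * int N" by (metis of_int_eq_iff of_int_mult of_int_of_nat_eq)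
  then show "N dvd k" by (metis dvd_triv_right int_dvd_int_iff)
qed

lemma om_geo:
  assumes "N > 0"
  shows "(\<Sum>t<N. (om N ^ k) ^ t) = (if N dvd k then of_nat N else 0)"
proof (cases "N dvd k")
  case True
  then have "om N ^ k = 1" using om_eq1[OF assms] by simp
  then show ?thesis using True by simp
next
  case False
  then have u: "om N ^ k \<noteq> 1" using om_eq1[OF assms] by simp
  have "(om N ^ k) ^ N = (om N ^ N) ^ k" by (simp flip: power_mult add: mult.commute)
  also have "om N ^ N = 1" using om_eq1[OF assms] by simp
  finally have "(om N ^ k) ^ N = 1" by simp
  then show ?thesis using False geometric_sum[OF u, of N] by simp
qed

definition ind :: "nat \<Rightarrow> nat \<Rightarrow> nat \<Rightarrow> real" where
  "ind N j l = (if N dvd (l + N - j) then 1 else 0)"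

lemma ind_small:
  assumes "j < N" "l < N"
  shows "ind N j l = (if l = j then 1 else 0)"
proof (cases "l = j")
  case True then show ?thesis by (simp add: ind_def)
next
  case False
  have "\<not> N dvd (l + N - j)"
  proof
    assume "N dvd (l + N - j)"
    then obtain q where q: "l + N - j = N * q" by auto
    have "0 < l + N - j" "l + N - j < 2 * N" using assms by auto
    then have "0 < q" "q < 2" using q by (auto simp: mult_less_cancel1)
    then have "q = 1" by simp
    then show False using q False assms by simp
  qed
  then show ?thesis using False by (simp add: ind_def)
qed

lemma ind_01: "0 \<le> ind N j l \<and> ind N j l \<le> 1"
  by (simp add: ind_def)

lemma avg_poly:
  assumes "N > 0" "j < N"
  shows "(\<Sum>t<N. (\<Sum>i\<le>D. of_real (a i) * (of_real r * om N ^ t) ^ i) * om N ^ (t * (N - j)))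
       = of_nat N * of_real (\<Sum>i\<le>D. a i * r ^ i * ind N j i)"
proof -
  have "(\<Sum>t<N. (\<Sum>i\<le>D. of_real (a i) * (of_real r * om N ^ t) ^ i) * om N ^ (t * (N - j)))
      = (\<Sum>i\<le>D. of_real (a i) * of_real r ^ i * (\<Sum>t<N. (om N ^ (i + N - j)) ^ t))"
  proof -
    have "\<And>t i. (of_real r * om N ^ t) ^ i * om N ^ (t * (N - j)) = of_real r ^ i * (om N ^ (i + N - j)) ^ t"
    proof -
      fix t i
      have "i + N - j = i + (N - j)" using assms by simp
      then show "(of_real r * om N ^ t) ^ i * om N ^ (t * (N - j)) = of_real r ^ i * (om N ^ (i + N - j)) ^ t"
        by (simp add: power_mult_distrib power_add flip: power_mult) (simp add: mult.commute)
    qed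
    then show ?thesis
      by (simp add: sum_distrib_right sum_distrib_left mult.assoc sum.swap[of _ "{..<N}"])
  qed
  also have "\<dots> = (\<Sum>i\<le>D. of_real (a i) * of_real r ^ i * (of_nat N * of_real (ind N j i)))"
    using om_geo[OF assms(1)] by (intro sum.cong refl) (auto simp: ind_def)
  also have "\<dots> = of_nat N * of_real (\<Sum>i\<le>D. a i * r ^ i * ind N j i)"
    by (simp add: sum_distrib_left algebra_simps)
  finally show ?thesis .
qed

lemma poly_cp_sum: "poly (cp Q) z = (\<Sum>i\<le>degree Q. of_real (coeff Q i) * z ^ i)"
  by (simp add: poly_altdef)

lemma norm_om [simp]: "norm (om N) = 1"
  by (simp add: om_def)

lemma cauchy_est:
  assumes r: "\<rho> > 0" and M: "\<forall>z. cmod z = \<rho> \<longrightarrow> cmod (poly (cp Q) z) \<le> M"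
  shows "\<bar>coeff Q l\<bar> * \<rho> ^ l \<le> M"
proof -
  define N where "N = max (degree Q) l + 1"
  have N: "N > 0" "l < N" "degree Q < N" by (auto simp: N_def)
  have "(\<Sum>t<N. poly (cp Q) (of_real \<rho> * om N ^ t) * om N ^ (t * (N - l)))
      = of_nat N * of_real (\<Sum>i\<le>degree Q. coeff Q i * \<rho> ^ i * ind N l i)"
    unfolding poly_cp_sum by (rule avg_poly[OF N(1,2)])
  also have "(\<Sum>i\<le>degree Q. coeff Q i * \<rho> ^ i * ind N l i) = coeff Q l * \<rho> ^ l"
  proof -
    have "(\<Sum>i\<le>degree Q. coeff Q i * \<rho> ^ i * ind N l i) = (\<Sum>i\<le>degree Q. if i = l then coeff Q i * \<rho> ^ i else 0)"
      using N by (intro sum.cong) (auto simp: ind_small)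
    also have "\<dots> = coeff Q l * \<rho> ^ l" by (auto simp: coeff_eq_0)
    finally show ?thesis .
  qed
  finally have eq: "(\<Sum>t<N. poly (cp Q) (of_real \<rho> * om N ^ t) * om N ^ (t * (N - l)))
      = of_nat N * of_real (coeff Q l * \<rho> ^ l)" .
  have "real N * (\<bar>coeff Q l\<bar> * \<rho> ^ l) = cmod (of_nat N * of_real (coeff Q l * \<rho> ^ l))"
    using r by (simp add: norm_mult abs_mult norm_power)
  also have "\<dots> \<le> (\<Sum>t<N. cmod (poly (cp Q) (of_real \<rho> * om N ^ t) * om N ^ (t * (N - l))))"
    unfolding eq[symmetric] by (rule norm_sum)
  also have "\<dots> \<le> (\<Sum>t<N. M)"
  proof (intro sum_mono)
    fix t
    have "cmod (of_real \<rho> * om N ^ t) = \<rho>" using r by (simp add: norm_mult norm_power)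
    then show "cmod (poly (cp Q) (of_real \<rho> * om N ^ t) * om N ^ (t * (N - l))) \<le> M"
      using M by (simp add: norm_mult norm_power)
  qed
  also have "\<dots> = real N * M" by simp
  finally show ?thesis using N by simp
qed



lemma half_tail: "(\<Sum>i\<le>D. if N \<le> i then (1/2::real) ^ i else 0) = (if N \<le> D then 2 * (1/2) ^ N - (1/2) ^ D else 0)"
proof (induction D)
  case 0 then show ?case by simp
next
  case (Suc D)
  show ?case
  proof (cases "N \<le> D")
    case True then show ?thesis using Suc by simp
  next
    case False
    then show ?thesis using Suc by (cases "N = Suc D") auto
  qed
qed

lemma half_tail_le: "(\<Sum>i\<le>D. if N \<le> i then (1/2::real) ^ i else 0) \<le> 2 * (1/2) ^ N"
  unfolding half_tail by simp

lemma avg_G_close: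
  assumes r: "r > 0" and N: "j < N"
    and cb: "\<forall>i. \<bar>coeff Q i\<bar> * (2 * r) ^ i \<le> M"
  shows "\<bar>(\<Sum>i\<le>degree Q. coeff Q i * r ^ i * ind N j i) - coeff Q j * r ^ j\<bar> \<le> M * (2 * (1/2) ^ N)"
proof -
  have "\<bar>coeff Q 0\<bar> \<le> M" using cb[rule_format, of 0] by simp
  then have M: "M \<ge> 0" using abs_ge_zero[of "coeff Q 0"] by linarith
  have cj: "coeff Q j * r ^ j = (\<Sum>i\<le>degree Q. if i = j then coeff Q i * r ^ i else 0)"
    by (auto simp: coeff_eq_0)
  have "(\<Sum>i\<le>degree Q. coeff Q i * r ^ i * ind N j i) - coeff Q j * r ^ j
      = (\<Sum>i\<le>degree Q. coeff Q i * r ^ i * (ind N j i - (if i = j then 1 else 0)))"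
    unfolding cj by (subst sum_subtractf[symmetric]) (intro sum.cong refl, simp add: algebra_simps)
  also have "\<bar>\<dots>\<bar> \<le> (\<Sum>i\<le>degree Q. \<bar>coeff Q i * r ^ i * (ind N j i - (if i = j then 1 else 0))\<bar>)"
    by (rule sum_abs)
  also have "\<dots> \<le> (\<Sum>i\<le>degree Q. M * (if N \<le> i then (1/2) ^ i else 0))"
  proof (intro sum_mono)
    fix i
    show "\<bar>coeff Q i * r ^ i * (ind N j i - (if i = j then 1 else 0))\<bar> \<le> M * (if N \<le> i then (1/2) ^ i else 0)"
    proof (cases "N \<le> i")
      case False
      then show ?thesis using N by (simp add: ind_small)
    next
      case True
      have "\<bar>ind N j i - (if i = j then 1 else 0)\<bar> \<le> 1" using ind_01[of N j i] by auto
      then have "\<bar>coeff Q i * r ^ i * (ind N j i - (if i = j then 1 else 0))\<bar> \<le> \<bar>coeff Q i\<bar> * r ^ i"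
        using r by (simp add: abs_mult mult_left_le)
      also have "\<bar>coeff Q i\<bar> * r ^ i = (\<bar>coeff Q i\<bar> * (2 * r) ^ i) * (1/2) ^ i"
        by (simp add: power_mult_distrib power_divide field_simps)
      also have "\<dots> \<le> M * (1/2) ^ i" using cb by (intro mult_right_mono) auto
      finally show ?thesis using True by simp
    qed
  qed
  also have "\<dots> = M * (\<Sum>i\<le>degree Q. if N \<le> i then (1/2) ^ i else 0)"
    by (simp add: sum_distrib_left)
  also have "\<dots> \<le> M * (2 * (1/2) ^ N)" using M by (intro mult_left_mono half_tail_le) auto
  finally show ?thesis .
qed



lemma coeff_extract:
  fixes e :: "nat \<Rightarrow> nat \<Rightarrow> real" and G :: "nat \<Rightarrow> real poly" and F :: "complex \<Rightarrow> complex"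
  assumes R: "R > 0"
    and e_hi: "\<And>n l. 2 * n < l \<Longrightarrow> e n l = 0"
    and e_lo: "\<And>n l. l < n \<Longrightarrow> e n l = 0"
    and summ: "summable (\<lambda>n. \<Sum>l\<le>2 * n. \<bar>e n l\<bar> * R ^ l)"
    and Fs: "\<And>z. cmod z \<le> R \<Longrightarrow> (\<lambda>n. \<Sum>l\<le>2 * n. of_real (e n l) * z ^ l) sums F z"
    and unif: "\<And>\<epsilon>. \<epsilon> > 0 \<Longrightarrow> eventually (\<lambda>k. \<forall>z. (cmod z = R \<or> cmod z = R / 2) \<longrightarrow>
                 cmod (poly (cp (G k)) z - F z) < \<epsilon>) sequentially"
  shows "(\<lambda>k. coeff (G k) j) \<longlonglongrightarrow> (\<Sum>n\<le>j. e n j)"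
proof -
  define B where "B n = (\<Sum>l\<le>2 * n. \<bar>e n l\<bar> * R ^ l)" for n
  define S where "S = suminf B"
  have sB: "summable B" using summ by (simp add: B_def[abs_def])
  have B0: "B n \<ge> 0" for n using R unfolding B_def by (intro sum_nonneg) auto
  have S0: "S \<ge> 0" unfolding S_def using sB B0 by (simp add: suminf_nonneg)
  define r where "r = R / 2"
  have r: "r > 0" "2 * r = R" "r \<le> R" using R by (auto simp: r_def)
  have term_bound: "cmod (\<Sum>l\<le>2 * n. of_real (e n l) * z ^ l) \<le> B n" if "cmod z \<le> R" for z n
  proof -
    have "cmod (\<Sum>l\<le>2 * n. of_real (e n l) * z ^ l) \<le> (\<Sum>l\<le>2 * n. cmod (of_real (e n l) * z ^ l))"
      by (rule norm_sum)
    also have "\<dots> \<le> B n" unfolding B_def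
    proof (intro sum_mono)
      fix l
      have "cmod z ^ l \<le> R ^ l" using that by (intro power_mono) auto
      then show "cmod (of_real (e n l) * z ^ l) \<le> \<bar>e n l\<bar> * R ^ l"
        by (simp add: norm_mult norm_power mult_left_mono)
    qed
    finally show ?thesis .
  qed
  have Fb: "cmod (F z) \<le> S" if "cmod z \<le> R" for z
  proof -
    have "F z = (\<Sum>n. \<Sum>l\<le>2 * n. of_real (e n l) * z ^ l)" using Fs[OF that] by (simp add: sums_iff)
    also have "cmod \<dots> \<le> S" unfolding S_def
      by (rule norm_suminf_le[OF term_bound[OF that] sB])
    finally show ?thesis .
  qed
  have evB: "eventually (\<lambda>k. \<forall>i. \<bar>coeff (G k) i\<bar> * R ^ i \<le> S + 1) sequentially"
  proof -
  have ev1: "eventually (\<lambda>k. \<forall>z. (cmod z = R \<or> cmod z = R / 2) \<longrightarrow>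
                 cmod (poly (cp (G k)) z - F z) < 1) sequentially" using unif[of 1] by simp
  show ?thesis using ev1
  proof (rule eventually_mono)
    fix k assume h: "\<forall>z. (cmod z = R \<or> cmod z = R / 2) \<longrightarrow> cmod (poly (cp (G k)) z - F z) < 1"
    have "\<forall>z. cmod z = R \<longrightarrow> cmod (poly (cp (G k)) z) \<le> S + 1"
    proof (intro allI impI)
      fix z assume z: "cmod z = R"
      have "cmod (poly (cp (G k)) z) \<le> cmod (poly (cp (G k)) z - F z) + cmod (F z)"
        using norm_triangle_ineq[of "poly (cp (G k)) z - F z" "F z"] by simp
      then show "cmod (poly (cp (G k)) z) \<le> S + 1" using h z Fb[of z] by force
    qed
    then show "\<forall>i. \<bar>coeff (G k) i\<bar> * R ^ i \<le> S + 1" using cauchy_est[OF R] by blast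
  qed
  qed
  define a where "a N n = (\<Sum>l\<le>2 * n. e n l * r ^ l * ind N j l)" for N n
  have a_bound: "\<bar>a N n\<bar> \<le> B n" for N n
  proof -
    have "\<bar>a N n\<bar> \<le> (\<Sum>l\<le>2 * n. \<bar>e n l * r ^ l * ind N j l\<bar>)" unfolding a_def by (rule sum_abs)
    also have "\<dots> \<le> B n" unfolding B_def
    proof (intro sum_mono)
      fix l
      have "r ^ l \<le> R ^ l" using r by (intro power_mono) auto
      moreover have "\<bar>ind N j l\<bar> \<le> 1" using ind_01[of N j l] by simp
      ultimately have "\<bar>r ^ l * ind N j l\<bar> \<le> R ^ l" using r
        by (simp add: abs_mult) (metis mult_left_le abs_ge_zero order_trans zero_le_power less_imp_le)
      then show "\<bar>e n l * r ^ l * ind N j l\<bar> \<le> \<bar>e n l\<bar> * R ^ l"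
        by (simp add: abs_mult mult.assoc mult_left_mono)
    qed
    finally show ?thesis .
  qed
  have a_summ: "summable (a N)" for N
    by (rule summable_comparison_test[OF _ sB]) (use a_bound in auto)
  have avgF: "(\<Sum>t<N. F (of_real r * om N ^ t) * om N ^ (t * (N - j))) = of_nat N * of_real (suminf (a N))"
    if N: "N > 0" "j < N" for N
  proof -
    define w where "w t = om N ^ (t * (N - j))" for t
    define tm where "tm t = (\<lambda>n. \<Sum>l\<le>2 * n. of_real (e n l) * (of_real r * om N ^ t) ^ l)" for t
    have pt: "cmod (of_real r * om N ^ t) \<le> R" for t using r by (simp add: norm_mult norm_power)
    have Feq: "F (of_real r * om N ^ t) = suminf (tm t)" for t
      using Fs[OF pt] by (simp add: sums_iff tm_def)
    have st: "summable (\<lambda>n. tm t n * w t)" for t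
      using Fs[OF pt] by (intro summable_mult2) (simp add: sums_iff tm_def)
    have "(\<Sum>t<N. F (of_real r * om N ^ t) * w t) = (\<Sum>t<N. \<Sum>n. tm t n * w t)"
    proof -
      have ts: "summable (tm t)" for t using Fs[OF pt] by (simp add: sums_iff tm_def)
      show ?thesis unfolding Feq by (intro sum.cong refl suminf_mult2 ts)
    qed
    also have "\<dots> = (\<Sum>n. \<Sum>t<N. tm t n * w t)"
      by (rule suminf_sum[symmetric]) (use st in auto)
    also have "\<dots> = (\<Sum>n. of_nat N * of_real (a N n))"
      unfolding tm_def w_def a_def by (subst avg_poly[OF N]) simp
    also have "\<dots> = of_nat N * of_real (suminf (a N))"
      using a_summ[of N] by (simp add: suminf_mult suminf_of_real summable_of_real_iff)
    finally show ?thesis by (simp add: w_def)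
  qed
  define c where "c = (\<Sum>n\<le>j. e n j)"
  have closeF: "\<bar>suminf (a N) - c * r ^ j\<bar> \<le> S * (1/2) ^ N" if N: "j < N" for N
  proof -
    have fin: "\<And>n. n \<notin> {..j} \<Longrightarrow> e n j * r ^ j = 0" using e_lo by auto
    have c_eq: "c * r ^ j = (\<Sum>n. e n j * r ^ j)"
      unfolding c_def by (subst suminf_finite[where N="{..j}" and f="\<lambda>n. e n j * r ^ j"]) (auto simp: sum_distrib_right fin)
    have sc: "summable (\<lambda>n. e n j * r ^ j)" by (rule summable_finite[where N="{..j}"]) (auto simp: fin)
    have diff: "suminf (a N) - c * r ^ j = (\<Sum>n. a N n - e n j * r ^ j)"
      unfolding c_eq by (rule suminf_diff[OF a_summ sc])
    have each: "\<bar>a N n - e n j * r ^ j\<bar> \<le> B n * (1/2) ^ N" for n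
    proof -
      have ej: "e n j * r ^ j = (\<Sum>l\<le>2 * n. if l = j then e n l * r ^ l else 0)"
        using e_hi[of n j] by auto
      have "a N n - e n j * r ^ j = (\<Sum>l\<le>2 * n. e n l * r ^ l * (ind N j l - (if l = j then 1 else 0)))"
        unfolding ej a_def by (subst sum_subtractf[symmetric]) (intro sum.cong refl, simp add: algebra_simps)
      also have "\<bar>\<dots>\<bar> \<le> (\<Sum>l\<le>2 * n. \<bar>e n l * r ^ l * (ind N j l - (if l = j then 1 else 0))\<bar>)"
        by (rule sum_abs)
      also have "\<dots> \<le> (\<Sum>l\<le>2 * n. \<bar>e n l\<bar> * R ^ l * (1/2) ^ N)"
      proof (intro sum_mono)
        fix l
        show "\<bar>e n l * r ^ l * (ind N j l - (if l = j then 1 else 0))\<bar> \<le> \<bar>e n l\<bar> * R ^ l * (1/2) ^ N"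
        proof (cases "N \<le> l")
          case False
          then show ?thesis using N R by (simp add: ind_small)
        next
          case True
          have i1: "\<bar>ind N j l - (if l = j then 1 else 0)\<bar> \<le> 1" using ind_01[of N j l] by auto
          have "r ^ l = R ^ l * (1/2) ^ l" by (simp add: r_def power_divide)
          also have "\<dots> \<le> R ^ l * (1/2) ^ N"
            using True R by (intro mult_left_mono power_decreasing) auto
          finally have rl: "r ^ l \<le> R ^ l * (1/2) ^ N" .
          have "\<bar>e n l * r ^ l * (ind N j l - (if l = j then 1 else 0))\<bar>
              = \<bar>e n l\<bar> * r ^ l * \<bar>ind N j l - (if l = j then 1 else 0)\<bar>"
            using r by (simp add: abs_mult)
          also have "\<dots> \<le> \<bar>e n l\<bar> * r ^ l * 1"
            using i1 r by (intro mult_left_mono) auto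
          also have "\<dots> \<le> \<bar>e n l\<bar> * (R ^ l * (1/2) ^ N)"
            using rl by (simp add: mult_left_mono)
          finally show ?thesis by (simp add: mult.assoc)
        qed
      qed
      also have "\<dots> = B n * (1/2) ^ N" by (simp add: B_def sum_distrib_right)
      finally show ?thesis .
    qed
    have "\<bar>suminf (a N) - c * r ^ j\<bar> \<le> (\<Sum>n. B n * (1/2) ^ N)"
      unfolding diff using each by (intro norm_suminf_le[where 'a=real, simplified]) (auto intro: summable_mult2 sB)
    also have "\<dots> = S * (1/2) ^ N" unfolding S_def by (rule suminf_mult2[symmetric, OF sB])
    finally show ?thesis .
  qed
  define AG where "AG k N = (\<Sum>i\<le>degree (G k). coeff (G k) i * r ^ i * ind N j i)" for k N
  have closeAG: "\<bar>AG k N - suminf (a N)\<bar> < \<delta>"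
    if N: "N > 0" "j < N" and k: "\<forall>z. cmod z = R / 2 \<longrightarrow> cmod (poly (cp (G k)) z - F z) < \<delta>" for k N \<delta>
  proof -
    define w where "w t = om N ^ (t * (N - j))" for t
    have AGeq: "(\<Sum>t<N. poly (cp (G k)) (of_real r * om N ^ t) * w t) = of_nat N * of_real (AG k N)"
      unfolding poly_cp_sum AG_def w_def by (rule avg_poly[OF N])
    have "of_nat N * of_real (AG k N - suminf (a N))
        = (\<Sum>t<N. (poly (cp (G k)) (of_real r * om N ^ t) - F (of_real r * om N ^ t)) * w t)"
      using AGeq avgF[OF N] by (simp add: sum_subtractf algebra_simps w_def)
    then have "real N * \<bar>AG k N - suminf (a N)\<bar>
        = cmod (\<Sum>t<N. (poly (cp (G k)) (of_real r * om N ^ t) - F (of_real r * om N ^ t)) * w t)"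
      by (metis norm_mult norm_of_nat norm_of_real)
    also have "\<dots> \<le> (\<Sum>t<N. cmod ((poly (cp (G k)) (of_real r * om N ^ t) - F (of_real r * om N ^ t)) * w t))"
      by (rule norm_sum)
    also have "\<dots> < (\<Sum>t<N. \<delta>)"
    proof (rule sum_strict_mono)
      fix t assume "t \<in> {..<N}"
      have "cmod (of_real r * om N ^ t) = R / 2" using r by (simp add: norm_mult norm_power r_def)
      then show "cmod ((poly (cp (G k)) (of_real r * om N ^ t) - F (of_real r * om N ^ t)) * w t) < \<delta>"
        using k by (simp add: norm_mult norm_power w_def)
    qed (use N in auto)
    also have "\<dots> = real N * \<delta>" by simp
    finally show ?thesis using N by simp
  qed
  have Gclose: "\<bar>AG k N - coeff (G k) j * r ^ j\<bar> \<le> (S + 1) * (2 * (1/2) ^ N)"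
    if N: "j < N" and k: "\<forall>i. \<bar>coeff (G k) i\<bar> * R ^ i \<le> S + 1" for k N
    unfolding AG_def using avg_G_close[OF r(1) N, of "G k" "S + 1"] k r(2) by simp
  show ?thesis
    unfolding tendsto_iff dist_real_def
  proof (intro allI impI)
    fix \<epsilon> :: real assume \<epsilon>: "\<epsilon> > 0"
    have rj: "r ^ j > 0" using r by simp
    obtain N0 where N0: "(1/2::real) ^ N0 < \<epsilon> * r ^ j / (2 * (3 * S + 2))"
      using real_arch_pow_inv[of "\<epsilon> * r ^ j / (2 * (3 * S + 2))" "1/2"] \<epsilon> rj S0 by auto
    define N where "N = max N0 (Suc j)"
    have N: "N > 0" "j < N" by (auto simp: N_def)
    have hN: "(1/2::real) ^ N \<le> (1/2) ^ N0" by (intro power_decreasing) (auto simp: N_def)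
    have small: "(3 * S + 2) * (1/2::real) ^ N < \<epsilon> * r ^ j / 2"
    proof -
      have "(3 * S + 2) * (1/2::real) ^ N \<le> (3 * S + 2) * (1/2) ^ N0"
        using hN S0 by (intro mult_left_mono) auto
      also have "\<dots> < (3 * S + 2) * (\<epsilon> * r ^ j / (2 * (3 * S + 2)))"
        using N0 S0 by (intro mult_strict_left_mono) auto
      also have "\<dots> = \<epsilon> * r ^ j / 2" using S0 by (simp add: field_simps)
      finally show ?thesis .
    qed
    define \<delta> where "\<delta> = \<epsilon> * r ^ j / 2"
    have \<delta>: "\<delta> > 0" using \<epsilon> rj by (simp add: \<delta>_def)
    show "eventually (\<lambda>k. \<bar>coeff (G k) j - (\<Sum>n\<le>j. e n j)\<bar> < \<epsilon>) sequentially"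
      using evB unif[OF \<delta>]
    proof eventually_elim
      case (elim k)
      have k2: "\<forall>z. cmod z = R / 2 \<longrightarrow> cmod (poly (cp (G k)) z - F z) < \<delta>" using elim(2) by blast
      have t1: "\<bar>AG k N - coeff (G k) j * r ^ j\<bar> \<le> (S + 1) * (2 * (1/2) ^ N)"
        using Gclose[OF N(2) elim(1)] .
      have t2: "\<bar>AG k N - suminf (a N)\<bar> < \<delta>" using closeAG[OF N k2] .
      have t3: "\<bar>suminf (a N) - c * r ^ j\<bar> \<le> S * (1/2) ^ N" using closeF[OF N(2)] .
      have "\<bar>coeff (G k) j - c\<bar> * r ^ j = \<bar>coeff (G k) j * r ^ j - c * r ^ j\<bar>"
        unfolding left_diff_distrib[symmetric] abs_mult using rj by simp
      also have "\<dots> < (S + 1) * (2 * (1/2) ^ N) + \<delta> + S * (1/2) ^ N"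
        using t1 t2 t3 by linarith
      also have "\<dots> = (3 * S + 2) * (1/2) ^ N + \<delta>" by (simp add: algebra_simps)
      also have "\<dots> < \<epsilon> * r ^ j" using small by (simp add: \<delta>_def)
      finally have "\<bar>coeff (G k) j - c\<bar> * r ^ j < \<epsilon> * r ^ j" .
      then show ?case using rj by (simp add: c_def)
    qed
  qed
qed



lemma cp_sum: "cp (\<Sum>k\<in>A. f k) = (\<Sum>k\<in>A. cp (f k))"
  by (induction A rule: infinite_finite_induct) auto

lemma slice_poly:
  assumes rp: "real_poly2 p" and st: "stable2 p" and al: "\<alpha> > 0"
  shows "\<exists>Q. (\<forall>z. poly (cp Q) z = p (of_real \<alpha> * z) z) \<and> real_rooted Q"
proof -
  obtain N c where pc: "\<forall>x y. p x y = (\<Sum>i\<le>N. \<Sum>j\<le>N. of_real (c i j) * x ^ i * y ^ j)"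
    using rp unfolding real_poly2_def by blast
  define Q where "Q = (\<Sum>i\<le>N. \<Sum>j\<le>N. monom (c i j * \<alpha> ^ i) (i + j))"
  have ev: "poly (cp Q) z = p (of_real \<alpha> * z) z" for z
    unfolding Q_def cp_sum poly_sum pc[rule_format]
    by (intro sum.cong refl) (simp add: poly_monom power_mult_distrib power_add)
  have "real_rooted Q" unfolding real_rooted_def
  proof (intro disjI2 allI impI)
    fix z assume z: "poly (map_poly complex_of_real Q) z = 0"
    then have z': "poly (cp Q) z = 0" by (simp add: cp_def)
    show "Im z = 0"
    proof (rule ccontr)
      assume "Im z \<noteq> 0"
      then consider "Im z > 0" | "Im (cnj z) > 0" by force
      then show False
      proof cases
        case 1
        then have "Im (of_real \<alpha> * z) > 0" using al by simp
        then show False using st z' ev 1 unfolding stable2_def by metis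
      next
        case 2
        have "poly (cp Q) (cnj z) = 0" using z' by (simp add: poly_cp_cnj)
        moreover have "Im (of_real \<alpha> * cnj z) > 0" using al 2 by (simp add: mult_pos_neg)
        ultimately show False using st ev 2 unfolding stable2_def by metis
      qed
    qed
  qed
  then show ?thesis using ev by blast
qed

lemma dom_pos:
  fixes d :: "nat \<Rightarrow> real" and q :: "nat \<Rightarrow> nat"
  assumes S: "finite S" "kk \<in> S" and d0: "d kk > 0"
    and others: "\<And>n. n \<in> S \<Longrightarrow> n \<noteq> kk \<Longrightarrow> q n < q kk \<or> d n = 0"
  shows "\<exists>\<alpha>0\<ge>1. \<forall>\<alpha>\<ge>\<alpha>0. (\<Sum>n\<in>S. d n * \<alpha> ^ q n) > 0"
proof -
  define D where "D = (\<Sum>n\<in>S - {kk}. \<bar>d n\<bar>)"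
  have D0: "D \<ge> 0" unfolding D_def by (intro sum_nonneg) auto
  define \<alpha>0 where "\<alpha>0 = D / d kk + 1"
  have a1: "\<alpha>0 \<ge> 1" using D0 d0 by (simp add: \<alpha>0_def)
  have "\<forall>\<alpha>\<ge>\<alpha>0. (\<Sum>n\<in>S. d n * \<alpha> ^ q n) > 0"
  proof (intro allI impI)
    fix \<alpha> :: real assume a: "\<alpha> \<ge> \<alpha>0"
    then have a1': "\<alpha> \<ge> 1" using a1 by simp
    have "(\<Sum>n\<in>S. d n * \<alpha> ^ q n) = d kk * \<alpha> ^ q kk + (\<Sum>n\<in>S - {kk}. d n * \<alpha> ^ q n)"
      using S by (simp add: sum.remove)
    moreover have "\<bar>\<Sum>n\<in>S - {kk}. d n * \<alpha> ^ q n\<bar> \<le> D * \<alpha> ^ (q kk - 1)"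
    proof -
      have "\<bar>\<Sum>n\<in>S - {kk}. d n * \<alpha> ^ q n\<bar> \<le> (\<Sum>n\<in>S - {kk}. \<bar>d n * \<alpha> ^ q n\<bar>)" by (rule sum_abs)
      also have "\<dots> \<le> (\<Sum>n\<in>S - {kk}. \<bar>d n\<bar> * \<alpha> ^ (q kk - 1))"
      proof (intro sum_mono)
        fix n assume n: "n \<in> S - {kk}"
        show "\<bar>d n * \<alpha> ^ q n\<bar> \<le> \<bar>d n\<bar> * \<alpha> ^ (q kk - 1)"
        proof (cases "d n = 0")
          case True then show ?thesis by simp
        next
          case False
          then have "q n < q kk" using others n by auto
          then have "\<alpha> ^ q n \<le> \<alpha> ^ (q kk - 1)" using a1' by (intro power_increasing) auto
          then show ?thesis using a1' by (simp add: abs_mult mult_left_mono)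
        qed
      qed
      also have "\<dots> = D * \<alpha> ^ (q kk - 1)" by (simp add: D_def sum_distrib_right)
      finally show ?thesis .
    qed
    moreover have "D * \<alpha> ^ (q kk - 1) < d kk * \<alpha> ^ q kk"
    proof (cases "q kk = 0")
      case True
      have "D = 0" unfolding D_def using others True by (intro sum.neutral) auto
      then show ?thesis using True d0 by simp
    next
      case False
      have "D < d kk * \<alpha>" using a d0 by (simp add: \<alpha>0_def field_simps)
      then have "D * \<alpha> ^ (q kk - 1) < d kk * \<alpha> * \<alpha> ^ (q kk - 1)"
        using a1' by (intro mult_strict_right_mono) auto
      also have "\<dots> = d kk * \<alpha> ^ q kk"
        using False by (cases "q kk") (auto simp: mult.assoc)
      finally show ?thesis .
    qed
    ultimately show "(\<Sum>n\<in>S. d n * \<alpha> ^ q n) > 0" by linarith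
  qed
  then show ?thesis using a1 by blast
qed

lemma poly_cp_le: "degree P \<le> n \<Longrightarrow> poly (cp P) w = (\<Sum>i\<le>n. of_real (coeff P i) * w ^ i)"
  unfolding poly_cp_sum by (rule sum_ext_zero[symmetric]) (auto simp: coeff_eq_0)

lemma term_expand:
  fixes a :: "nat \<Rightarrow> real"
  shows "(\<Sum>i\<le>n. of_real (a i) * (z::complex) ^ (n + i))
       = (\<Sum>l\<le>2 * n. of_real (if n \<le> l then a (l - n) else 0) * z ^ l)"
proof -
  have "(\<Sum>l\<le>2 * n. of_real (if n \<le> l then a (l - n) else 0) * z ^ l)
      = (\<Sum>l\<in>{n..2*n}. of_real (a (l - n)) * z ^ l)"
    by (rule sum.mono_neutral_cong_right) auto
  also have "\<dots> = (\<Sum>l\<in>{0+n..n+n}. of_real (a (l - n)) * z ^ l)" by (simp add: mult_2)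
  also have "\<dots> = (\<Sum>i\<in>{0..n}. of_real (a i) * z ^ (i + n))"
    by (subst sum.shift_bounds_cl_nat_ivl) simp
  finally show ?thesis by (simp add: atLeast0AtMost add.commute)
qed



lemma small_poly_bound: "real ((2 * n + 1) * (n + 1)) \<le> 2 * 4 ^ n"
proof (induction n)
  case 0 then show ?case by simp
next
  case (Suc n)
  have "real ((2 * Suc n + 1) * (Suc n + 1)) = real ((2 * n + 1) * (n + 1)) + real (4 * n + 5)"
    by (simp add: algebra_simps)
  also have "\<dots> \<le> 2 * 4 ^ n + real (4 * n + 5)" using Suc by simp
  also have "real (4 * n + 5) \<le> 6 * 4 ^ n"
  proof -
    have "real (n + 1) \<le> 2 ^ n" using less_exp[of n] by (metis Suc_eq_plus1 Suc_leI of_nat_le_iff of_nat_numeral of_nat_power)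
    also have "(2::real) ^ n \<le> 4 ^ n" by (intro power_mono) auto
    finally have "real (n + 1) \<le> 4 ^ n" .
    moreover have "(1::real) \<le> 4 ^ n" by simp
    ultimately show ?thesis by simp
  qed
  finally show ?case by simp
qed



theorem mainTheorem9:
  fixes lam :: "nat \<Rightarrow> real" and T :: "real poly \<Rightarrow> real poly"
  assumes "multiplier_sequence lam"
    and "\<not> trivial_seq lam"
    and "\<forall>n. lam n \<ge> 0"
    and "\<forall>p q. T (p + q) = T p + T q"
    and "\<forall>c p. T (smult c p) = smult c (T p)"
    and "\<forall>n. T (hermite n) = smult (lam n) (hermite n)"
  shows "\<not> LP2 (\<lambda>x y. symbol T (- x) y)"
proof
  assume LP: "LP2 (\<lambda>x y. symbol T (- x) y)"
  note ms = assms(1) and nt = assms(2) and nn = assms(3)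
    and add = assms(4) and sm = assms(5) and ev = assms(6)
  obtain m where m: "lam m > 0" "lam (Suc m) > 0" "\<forall>k<m. lam k = 0"
    using support_start[OF ms nn nt] by blast
  obtain C \<rho> where C: "C \<ge> 0" and \<rho>: "\<rho> \<ge> 1" and bd: "\<forall>k. lam k \<le> C * \<rho> ^ k"
    using exp_bound[OF ms nn m] by blast
  have cT: "coeff (T (monom 1 n)) i = Pc lam n i" for n i
    using coeff_T_monom[OF add sm ev] .
  have degT: "degree (T (monom 1 n)) \<le> n" for n
    by (rule degree_le) (simp add: cT Pc_deg)
  define dd where "dd j n = (if n \<le> j then (-1) ^ n / fact n * Pc lam n (j - n) * (-1) ^ (j - n) else 0)"
    for j n :: nat
  define ee where "ee \<alpha> n l = (if n \<le> l then (-1) ^ n / fact n * Pc lam n (l - n) * (- \<alpha>) ^ (l - n) else 0)"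
    for \<alpha> :: real and n l :: nat
  have ee_dd: "(\<Sum>n\<le>j. ee \<alpha> n j) = (\<Sum>n\<le>j. dd j n * \<alpha> ^ (j - n))" for \<alpha> j
  proof (intro sum.cong refl)
    fix n assume "n \<in> {..j}"
    have "(- \<alpha>) ^ (j - n) = (-1) ^ (j - n) * \<alpha> ^ (j - n)"
      using power_mult_distrib[of "-1::real" \<alpha> "j-n"] by simp
    then show "ee \<alpha> n j = dd j n * \<alpha> ^ (j - n)" by (simp add: ee_def dd_def)
  qed
  have sq1: "(-1::real) ^ k * (-1) ^ k = 1" for k
    by (simp flip: power_add)
  obtain \<alpha>1 where \<alpha>1: "\<alpha>1 \<ge> 1" "\<forall>\<alpha>\<ge>\<alpha>1. (\<Sum>n\<le>2 * m. dd (2 * m) n * \<alpha> ^ (2 * m - n)) > 0"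
  proof -
    have "\<exists>\<alpha>0\<ge>1. \<forall>\<alpha>\<ge>\<alpha>0. (\<Sum>n\<in>{..2 * m}. dd (2 * m) n * \<alpha> ^ (2 * m - n)) > 0"
    proof (rule dom_pos[where kk = m])
      show "dd (2 * m) m > 0"
        using m by (simp add: dd_def Pc_lead mult_2 sq1[of m] field_simps)
    next
      fix n assume n: "n \<in> {..2 * m}" "n \<noteq> m"
      show "2 * m - n < 2 * m - m \<or> dd (2 * m) n = 0"
      proof (cases "n < m")
        case True then show ?thesis using Pc_below[OF m(3) True] by (simp add: dd_def)
      next
        case False then show ?thesis using n by auto
      qed
    qed auto
    then show ?thesis using that by auto
  qed
  obtain \<alpha>2 where \<alpha>2: "\<alpha>2 \<ge> 1" "\<forall>\<alpha>\<ge>\<alpha>2. (\<Sum>n\<le>2 * m + 2. dd (2 * m + 2) n * \<alpha> ^ (2 * m + 2 - n)) > 0"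
  proof -
    have "\<exists>\<alpha>0\<ge>1. \<forall>\<alpha>\<ge>\<alpha>0. (\<Sum>n\<in>{..2 * m + 2}. dd (2 * m + 2) n * \<alpha> ^ (2 * m + 2 - n)) > 0"
    proof (rule dom_pos[where kk = "Suc m"])
      have "2 * m + 2 - Suc m = Suc m" by simp
      then show "dd (2 * m + 2) (Suc m) > 0"
        using m by (simp only: dd_def) (simp add: Pc_lead sq1 field_simps del: power_Suc, auto intro!: divide_pos_pos add_pos_nonneg)
    next
      fix n assume n: "n \<in> {..2 * m + 2}" "n \<noteq> Suc m"
      show "2 * m + 2 - n < 2 * m + 2 - Suc m \<or> dd (2 * m + 2) n = 0"
      proof (cases "n < m")
        case True then show ?thesis using Pc_below[OF m(3) True] by (simp add: dd_def)
      next
        case False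
        show ?thesis
        proof (cases "n = m")
          case True
          have "Pc lam m (2 * m + 2 - m) = 0" by (rule Pc_deg) simp
          then show ?thesis using True by (simp add: dd_def)
        next
          case False then show ?thesis using n \<open>\<not> n < m\<close> by auto
        qed
      qed
    qed auto
    then show ?thesis using that by auto
  qed
  have zero1: "(\<Sum>n\<le>2 * m + 1. ee \<alpha> n (2 * m + 1)) = 0" for \<alpha>
  proof (intro sum.neutral ballI)
    fix n assume n: "n \<in> {..2 * m + 1}"
    have "odd (2 * m + 1 - n + n)" using n by simp
    then have "Pc lam n (2 * m + 1 - n) = 0" by (rule Pc_parity)
    then show "ee \<alpha> n (2 * m + 1) = 0" by (simp add: ee_def)
  qed
  define \<alpha> where "\<alpha> = max \<alpha>1 \<alpha>2"
  have al: "\<alpha> \<ge> 1" "\<alpha> \<ge> \<alpha>1" "\<alpha> \<ge> \<alpha>2" using \<alpha>1 by (auto simp: \<alpha>_def)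
  define c where "c j = (\<Sum>n\<le>j. ee \<alpha> n j)" for j
  have c0: "c (2 * m) > 0" using \<alpha>1(2) al unfolding c_def ee_dd by blast
  have c2: "c (2 * m + 2) > 0" using \<alpha>2(2) al unfolding c_def ee_dd by blast
  have c1: "c (2 * m + 1) = 0" unfolding c_def by (rule zero1)
  define R where "R = 1 / (32 * \<rho> * \<alpha>)"
  have R: "R > 0" "\<alpha> * R \<le> 1" "R \<le> 1" "4 * \<rho> * R \<le> 1/8"
  proof -
    have ar: "\<rho> * \<alpha> \<ge> 1" using mult_mono[OF \<rho> al(1)] \<rho> by simp
    show "R > 0" "\<alpha> * R \<le> 1" "R \<le> 1" "4 * \<rho> * R \<le> 1/8"
      using \<rho> al ar by (auto simp: R_def field_simps)
  qed
  have ee_bound: "\<bar>ee \<alpha> n l\<bar> * R ^ l \<le> real (n + 1) * C * (1/8) ^ n" for n l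
  proof (cases "n \<le> l")
    case False then show ?thesis using C by (simp add: ee_def)
  next
    case True
    then obtain i where i: "l = n + i" using le_Suc_ex by blast
    have "\<bar>ee \<alpha> n l\<bar> * R ^ l = \<bar>Pc lam n i\<bar> / fact n * (\<alpha> ^ i * R ^ (n + i))"
      using True i al by (simp add: ee_def abs_mult power_abs)
    also have "\<dots> \<le> (fact n * real (n + 1) * C * (4 * \<rho>) ^ n) / fact n * (\<alpha> ^ i * R ^ (n + i))"
      using Pc_bound[OF _ bd \<rho>] nn R al by (intro mult_right_mono divide_right_mono) auto
    also have "\<dots> = real (n + 1) * C * (4 * \<rho>) ^ n * ((\<alpha> * R) ^ i * R ^ n)"
      by (simp add: power_add power_mult_distrib)
    also have "\<dots> \<le> real (n + 1) * C * (4 * \<rho>) ^ n * (1 * R ^ n)"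
    proof -
      have "(\<alpha> * R) ^ i \<le> 1" using R al by (intro power_le_one) auto
      then show ?thesis using C \<rho> R by (intro mult_left_mono mult_right_mono) auto
    qed
    also have "\<dots> = real (n + 1) * C * (4 * \<rho> * R) ^ n" by (simp add: power_mult_distrib)
    also have "\<dots> \<le> real (n + 1) * C * (1/8) ^ n"
      using R C \<rho> by (intro mult_left_mono power_mono) auto
    finally show ?thesis .
  qed
  define B where "B n = (\<Sum>l\<le>2 * n. \<bar>ee \<alpha> n l\<bar> * R ^ l)" for n
  have B_bound: "B n \<le> 2 * C * (1/2) ^ n" for n
  proof -
    have "B n \<le> (\<Sum>l\<le>2 * n. real (n + 1) * C * (1/8) ^ n)"
      unfolding B_def by (intro sum_mono ee_bound)
    also have "\<dots> = real ((2 * n + 1) * (n + 1)) * C * (1/8) ^ n" by (simp add: algebra_simps)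
    also have "\<dots> \<le> 2 * 4 ^ n * C * (1/8) ^ n"
      using small_poly_bound[of n] C by (intro mult_right_mono) auto
    also have "\<dots> = 2 * C * (1/2) ^ n"
      by (simp add: power_divide field_simps flip: power_mult_distrib)
    finally show ?thesis .
  qed
  have B0: "B n \<ge> 0" for n unfolding B_def using R by (intro sum_nonneg) auto
  have sB: "summable B"
    by (rule summable_comparison_test[OF _ summable_mult[OF summable_geometric[of "1/2::real"]], of _ "2 * C"])
       (use B_bound B0 in auto)
  have al0: "\<alpha> > 0" using al by simp
  have termeq: "(-1) ^ n * poly (map_poly of_real (T (monom 1 n))) (- (of_real \<alpha> * z)) * z ^ n / of_nat (fact n)
      = (\<Sum>l\<le>2 * n. of_real (ee \<alpha> n l) * z ^ l)" for n and z :: complex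
  proof -
    define a where "a i = (-1) ^ n / fact n * Pc lam n i * (- \<alpha>) ^ i" for i
    have pe: "poly (map_poly of_real (T (monom 1 n))) w = (\<Sum>i\<le>n. of_real (Pc lam n i) * w ^ i)" for w :: complex
      using poly_cp_le[OF degT, of n w] by (simp add: cp_def cT)
    have "(-1) ^ n * poly (map_poly of_real (T (monom 1 n))) (- (of_real \<alpha> * z)) * z ^ n / of_nat (fact n)
        = (\<Sum>i\<le>n. (-1) ^ n * (of_real (Pc lam n i) * (- (of_real \<alpha> * z)) ^ i) * z ^ n / of_nat (fact n))"
      unfolding pe sum_distrib_left sum_distrib_right sum_divide_distrib ..
    also have "\<dots> = (\<Sum>i\<le>n. of_real (a i) * z ^ (n + i))"
    proof (intro sum.cong refl)
      fix i
      have "(- (of_real \<alpha> * z)) ^ i = of_real ((- \<alpha>) ^ i) * (z ^ i :: complex)"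
      proof -
        have "- (of_real \<alpha> * z) = of_real (- \<alpha>) * z" by simp
        then show ?thesis by (simp only: power_mult_distrib of_real_power)
      qed
      then show "(-1) ^ n * (of_real (Pc lam n i) * (- (of_real \<alpha> * z)) ^ i) * z ^ n / of_nat (fact n)
          = of_real (a i) * z ^ (n + i)"
        by (simp add: a_def power_add divide_inverse mult_ac)
    qed
    also have "\<dots> = (\<Sum>l\<le>2 * n. of_real (if n \<le> l then a (l - n) else 0) * z ^ l)"
      by (rule term_expand)
    also have "\<dots> = (\<Sum>l\<le>2 * n. of_real (ee \<alpha> n l) * z ^ l)"
      by (intro sum.cong refl) (simp add: a_def ee_def)
    finally show ?thesis .
  qed
  define F where "F z = symbol T (- (of_real \<alpha> * z)) z" for z
  have tb: "cmod (\<Sum>l\<le>2 * n. of_real (ee \<alpha> n l) * z ^ l) \<le> B n" if "cmod z \<le> R" for z n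
  proof -
    have "cmod (\<Sum>l\<le>2 * n. of_real (ee \<alpha> n l) * z ^ l) \<le> (\<Sum>l\<le>2 * n. cmod (of_real (ee \<alpha> n l) * z ^ l))"
      by (rule norm_sum)
    also have "\<dots> \<le> B n" unfolding B_def
    proof (intro sum_mono)
      fix l
      have "cmod z ^ l \<le> R ^ l" using that by (intro power_mono) auto
      then show "cmod (of_real (ee \<alpha> n l) * z ^ l) \<le> \<bar>ee \<alpha> n l\<bar> * R ^ l"
        by (simp add: norm_mult norm_power mult_left_mono)
    qed
    finally show ?thesis .
  qed
  have Fs: "(\<lambda>n. \<Sum>l\<le>2 * n. of_real (ee \<alpha> n l) * z ^ l) sums F z" if "cmod z \<le> R" for z
  proof -
    have sm: "summable (\<lambda>n. \<Sum>l\<le>2 * n. of_real (ee \<alpha> n l) * z ^ l)"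
      by (rule summable_comparison_test[OF _ sB]) (use tb[OF that] in auto)
    have "F z = (\<Sum>n. \<Sum>l\<le>2 * n. of_real (ee \<alpha> n l) * z ^ l)"
      unfolding F_def symbol_def by (simp only: termeq)
    then show ?thesis using sm by (simp add: summable_sums)
  qed
  obtain p where p: "\<forall>k. real_poly2 (p k) \<and> stable2 (p k)"
    and ul: "\<forall>K :: (complex \<times> complex) set. compact K \<longrightarrow>
        uniform_limit K (\<lambda>k z. p k (fst z) (snd z)) (\<lambda>z. symbol T (- fst z) (snd z)) sequentially"
    using LP unfolding LP2_def by blast
  have "\<forall>k. \<exists>Q. (\<forall>z. poly (cp Q) z = p k (of_real \<alpha> * z) z) \<and> real_rooted Q"
    using slice_poly p al0 by blast
  then obtain G where G: "\<forall>k. (\<forall>z. poly (cp (G k)) z = p k (of_real \<alpha> * z) z) \<and> real_rooted (G k)"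
    using choice[of "\<lambda>k Q. (\<forall>z. poly (cp Q) z = p k (of_real \<alpha> * z) z) \<and> real_rooted Q"] by blast
  define K where "K = (\<lambda>z. (of_real \<alpha> * z, z)) ` (sphere (0::complex) R \<union> sphere 0 (R / 2))"
  have cK: "compact K" unfolding K_def
    by (intro compact_continuous_image compact_Un compact_sphere) (intro continuous_intros)
  have unif: "eventually (\<lambda>k. \<forall>z. (cmod z = R \<or> cmod z = R / 2) \<longrightarrow>
                 cmod (poly (cp (G k)) z - F z) < \<epsilon>) sequentially" if e: "\<epsilon> > 0" for \<epsilon>
  proof -
    have "eventually (\<lambda>k. \<forall>x\<in>K. dist (p k (fst x) (snd x)) (symbol T (- fst x) (snd x)) < \<epsilon>) sequentially"
      using ul cK e unfolding uniform_limit_iff by blast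
    then show ?thesis
    proof (rule eventually_mono)
      fix k assume h: "\<forall>x\<in>K. dist (p k (fst x) (snd x)) (symbol T (- fst x) (snd x)) < \<epsilon>"
      show "\<forall>z. (cmod z = R \<or> cmod z = R / 2) \<longrightarrow> cmod (poly (cp (G k)) z - F z) < \<epsilon>"
      proof (intro allI impI)
        fix z assume z: "cmod z = R \<or> cmod z = R / 2"
        have "(of_real \<alpha> * z, z) \<in> K" unfolding K_def using z by auto
        then have "dist (p k (of_real \<alpha> * z) z) (symbol T (- (of_real \<alpha> * z)) z) < \<epsilon>"
          using h by fastforce
        then show "cmod (poly (cp (G k)) z - F z) < \<epsilon>"
          using G by (simp add: F_def dist_norm)
      qed
    qed
  qed
  have lim: "(\<lambda>k. coeff (G k) j) \<longlonglongrightarrow> c j" for j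
    unfolding c_def
  proof (rule coeff_extract[OF R(1)])
    fix n l :: nat assume "2 * n < l"
    then show "ee \<alpha> n l = 0" by (simp add: ee_def Pc_deg)
  next
    fix n l :: nat assume "l < n"
    then show "ee \<alpha> n l = 0" by (simp add: ee_def)
  next
    show "summable (\<lambda>n. \<Sum>l\<le>2 * n. \<bar>ee \<alpha> n l\<bar> * R ^ l)" using sB by (simp add: B_def[abs_def])
  next
    fix z :: complex assume "cmod z \<le> R"
    then show "(\<lambda>n. \<Sum>l\<le>2 * n. of_real (ee \<alpha> n l) * z ^ l) sums F z" by (rule Fs)
  next
    fix \<epsilon> :: real assume "\<epsilon> > 0"
    then show "eventually (\<lambda>k. \<forall>z. (cmod z = R \<or> cmod z = R / 2) \<longrightarrow>
                 cmod (poly (cp (G k)) z - F z) < \<epsilon>) sequentially" by (rule unif)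
  qed
  have nw: "fact (2 * m) * fact (2 * m + 2) * coeff (G k) (2 * m) * coeff (G k) (2 * m + 2)
      \<le> (fact (2 * m + 1))^2 * (coeff (G k) (2 * m + 1))^2" for k
    using rr_newton[of "G k" "2 * m"] G by auto
  have l1: "(\<lambda>k. fact (2 * m) * fact (2 * m + 2) * coeff (G k) (2 * m) * coeff (G k) (2 * m + 2))
      \<longlonglongrightarrow> fact (2 * m) * fact (2 * m + 2) * c (2 * m) * c (2 * m + 2)"
    by (intro tendsto_intros lim)
  have l2: "(\<lambda>k. (fact (2 * m + 1))^2 * (coeff (G k) (2 * m + 1))^2)
      \<longlonglongrightarrow> (fact (2 * m + 1))^2 * (c (2 * m + 1))^2"
    by (intro tendsto_intros lim)
  have "fact (2 * m) * fact (2 * m + 2) * c (2 * m) * c (2 * m + 2) \<le> (fact (2 * m + 1))^2 * (c (2 * m + 1))^2"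
    using LIMSEQ_le[OF l1 l2] nw by blast
  moreover have "fact (2 * m) * fact (2 * m + 2) * c (2 * m) * c (2 * m + 2) > (0::real)"
    using c0 c2 by simp
  ultimately show False using c1 by simp
qed

end
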